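(* Consider an iteration $t$ of the NSGA-II optimizing \textsc{OneMinMax} (any population size $N$, any offspring generation). All individuals of $R_t$ have rank one, and crowding distances are computed with respect to $R_t$. Let $v_1^{\min}=\min\{f_1(x):x\in R_t\}$, $v_1^{\max}=\max\{f_1(x):x\in R_t\}$, and assume $v_1^{\max}>v_1^{\min}$. Let $V=f(R_t)$, $V^+_{\mathrm{in}}=\{(v_1,v_2)\in V:\exists y\in R_t,\ f(y)=(v_1+1,v_2-1)\}$ and $V^-_{\mathrm{in}}=\{(v_1,v_2)\in V:\exists y\in R_t,\ f(y)=(v_1-1,v_2+1)\}$. Then for every $(v_1,v_2)\in V\setminus(V^+_{\mathrm{in}}\cap V^-_{\mathrm{in}})$ there is an individual $x\in R_t$ with $f(x)=(v_1,v_2)$ and $\mathrm{cDis}(x)\ge \frac{2}{v_1^{\max}-v_1^{\min}}$ (regardless of how ties are broken in the sorting steps of the crowding distance computation).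
   Context: Search space $\{0,1\}^n$; objective $f=(f_1,f_2)$, both maximized. Populations are multisets of bit strings; $f(P)=\{f(x):x\in P\}$. Crowding distance of the individuals of a set $S$ (computed with respect to $S$): start with $\mathrm{cDis}(x)=0$ for all $x\in S$; for each $i\in\{1,2\}$, sort $S$ in ascending $f_i$-value as $S_{i.1},\dots,S_{i.|S|}$ (ties broken arbitrarily), set $\mathrm{cDis}(S_{i.1})=\mathrm{cDis}(S_{i.|S|})=+\infty$, and for $2\le j\le |S|-1$ add $\frac{f_i(S_{i.j+1})-f_i(S_{i.j-1})}{f_i(S_{i.|S|})-f_i(S_{i.1})}$ to $\mathrm{cDis}(S_{i.j})$. In the NSGA-II, $R_t=P_t\cup Q_t$ denotes the multiset union of the parent population $P_t$ and offspring population $Q_t$ in iteration $t$, each of size $N$. \textsc{OneMinMax}: $f(x)=(n-\sum_{i=1}^n x_i,\ \sum_{i=1}^n x_i)$; no bit string strictly dominates another, so all individuals of any population have rank one in non-dominated sorting. *)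

theory Defs
  imports "HOL-Library.Extended_Real"
begin

text \<open>Bit strings are boolean lists of length n. A population (multiset) is
  represented as a list; its individuals are identified by their positions.\<close>

definition ones :: "bool list \<Rightarrow> nat" where
  "ones x = count_list x True"

definition omm1 :: "nat \<Rightarrow> bool list \<Rightarrow> int" where
  "omm1 n x = int n - int (ones x)"

definition omm2 :: "bool list \<Rightarrow> int" where
  "omm2 x = int (ones x)"

definition omm :: "nat \<Rightarrow> bool list \<Rightarrow> int \<times> int" where
  "omm n x = (omm1 n x, omm2 x)"

text \<open>sigma is a sorting of the individuals of S (positions 0..|S|-1) in ascending
  g-value, ties broken arbitrarily: sigma j is the position of the (j+1)-th individual.\<close>
definition sorting_by :: "('a \<Rightarrow> int) \<Rightarrow> 'a list \<Rightarrow> (nat \<Rightarrow> nat) \<Rightarrow> bool" where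
  "sorting_by g S sigma \<longleftrightarrow>
     bij_betw sigma {..<length S} {..<length S} \<and>
     (\<forall>j. Suc j < length S \<longrightarrow> g (S ! sigma j) \<le> g (S ! sigma (Suc j)))"

definition cdis_obj :: "('a \<Rightarrow> int) \<Rightarrow> 'a list \<Rightarrow> (nat \<Rightarrow> nat) \<Rightarrow> nat \<Rightarrow> ereal" where
  "cdis_obj g S sigma k =
    (let m = length S; j = the_inv_into {..<m} sigma k in
     if j = 0 \<or> j = m - 1 then \<infinity>
     else ereal (real_of_int (g (S ! sigma (Suc j)) - g (S ! sigma (j - 1)))
                 / real_of_int (g (S ! sigma (m - 1)) - g (S ! sigma 0))))"

definition cDis :: "('a \<Rightarrow> int) \<Rightarrow> ('a \<Rightarrow> int) \<Rightarrow> 'a list \<Rightarrow> (nat \<Rightarrow> nat) \<Rightarrow> (nat \<Rightarrow> nat)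
                     \<Rightarrow> nat \<Rightarrow> ereal" where
  "cDis g1 g2 S sigma1 sigma2 k = cdis_obj g1 S sigma1 k + cdis_obj g2 S sigma2 k"

end

theory Submission
  imports Defs
begin

lemma sort_mono:
  assumes "sorting_by g S s" "i \<le> j" "j < length S"
  shows "g (S ! s i) \<le> g (S ! s j)"
  using assms(2,3)
proof (induction j rule: dec_induct)
  case base then show ?case by simp
next
  case (step j)
  then have "g (S ! s j) \<le> g (S ! s (Suc j))" using assms(1) unfolding sorting_by_def by auto
  with step show ?case by simp
qed

lemma sort_inv:
  assumes "sorting_by g S s" "j < length S"
  shows "the_inv_into {..<length S} s (s j) = j"
  using assms unfolding sorting_by_def
  by (meson bij_betw_imp_inj_on lessThan_iff the_inv_into_f_f)

lemma sort_surj: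
  assumes "sorting_by g S s" "i < length S"
  shows "\<exists>j < length S. s j = i"
  using assms unfolding sorting_by_def bij_betw_def
  by (metis imageE lessThan_iff)

lemma sort_range:
  assumes "sorting_by g S s" "j < length S"
  shows "s j < length S"
  using assms unfolding sorting_by_def bij_betw_def by auto

lemma cdis_nonneg:
  assumes "sorting_by g S s" "k < length S"
  shows "cdis_obj g S s k \<ge> 0"
proof -
  obtain j where j: "j < length S" "s j = k" using sort_surj[OF assms] by blast
  define m where "m = length S"
  have inv: "the_inv_into {..<m} s k = j" using sort_inv[OF assms(1) j(1)] j m_def by simp
  show ?thesis
  proof (cases "j = 0 \<or> j = m - 1")
    case True then show ?thesis unfolding cdis_obj_def Let_def m_def[symmetric] inv by simp
  next
    case False
    then have "Suc j < m" using j m_def by auto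
    then have a: "g (S ! s (j - 1)) \<le> g (S ! s (Suc j))"
      using sort_mono[OF assms(1), of "j-1" "Suc j"] m_def by auto
    have b: "g (S ! s 0) \<le> g (S ! s (m - 1))"
      using sort_mono[OF assms(1), of 0 "m-1"] m_def j by auto
    have "real_of_int (g (S ! s (Suc j)) - g (S ! s (j - 1)))
          / real_of_int (g (S ! s (m - 1)) - g (S ! s 0)) \<ge> 0"
      using a b by simp
    then show ?thesis using False unfolding cdis_obj_def Let_def m_def[symmetric] inv by simp
  qed
qed

lemma cdis_ge:
  assumes "sorting_by g S s" "j < length S"
    and "g (S ! s (length S - 1)) - g (S ! s 0) = D" "D > 0"
    and "0 < j \<Longrightarrow> j < length S - 1 \<Longrightarrow> g (S ! s (Suc j)) - g (S ! s (j - 1)) \<ge> 2"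
  shows "cdis_obj g S s (s j) \<ge> ereal (2 / real_of_int D)"
proof -
  define m where "m = length S"
  have inv: "the_inv_into {..<m} s (s j) = j" using sort_inv[OF assms(1,2)] m_def by simp
  show ?thesis
  proof (cases "j = 0 \<or> j = m - 1")
    case True then show ?thesis unfolding cdis_obj_def Let_def m_def[symmetric] inv by simp
  next
    case False
    then have "0 < j" "j < m - 1" using assms(2) m_def by auto
    then have a: "real_of_int (g (S ! s (Suc j)) - g (S ! s (j - 1))) \<ge> 2"
      using assms(5) m_def by fastforce
    have "2 / real_of_int D \<le> real_of_int (g (S ! s (Suc j)) - g (S ! s (j - 1))) / real_of_int D"
      using a assms(4) by (simp add: divide_right_mono)
    then show ?thesis using False assms(3) unfolding cdis_obj_def Let_def m_def[symmetric] inv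
      by (simp add: m_def)
  qed
qed

lemma omm_eq: "omm n y = (omm1 n y, int n - omm1 n y)"
  unfolding omm_def omm1_def omm2_def by simp

lemma omm2_eq: "omm2 y = int n - omm1 n y"
  unfolding omm1_def omm2_def by simp

theorem lemma3:
  fixes n N :: nat and P Q R :: "bool list list" and sigma1 sigma2 :: "nat \<Rightarrow> nat"
    and vmin vmax :: int
  assumes "length P = N" and "length Q = N" and "R = P @ Q"
    and "\<forall>x\<in>set R. length x = n"
    and "sorting_by (omm1 n) R sigma1" and "sorting_by omm2 R sigma2"
    and "vmin = Min (omm1 n ` set R)" and "vmax = Max (omm1 n ` set R)"
    and "vmax > vmin"
  shows "\<forall>v \<in> omm n ` set R
           - ({(v1, v2) \<in> omm n ` set R. \<exists>y\<in>set R. omm n y = (v1 + 1, v2 - 1)}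
              \<inter> {(v1, v2) \<in> omm n ` set R. \<exists>y\<in>set R. omm n y = (v1 - 1, v2 + 1)}).
           \<exists>k < length R. omm n (R ! k) = v \<and>
             cDis (omm1 n) omm2 R sigma1 sigma2 k \<ge> ereal (2 / real_of_int (vmax - vmin))"
proof
  fix v
  assume vin: "v \<in> omm n ` set R
           - ({(v1, v2) \<in> omm n ` set R. \<exists>y\<in>set R. omm n y = (v1 + 1, v2 - 1)}
              \<inter> {(v1, v2) \<in> omm n ` set R. \<exists>y\<in>set R. omm n y = (v1 - 1, v2 + 1)})"
  define m where "m = length R"
  define D where "D = vmax - vmin"
  define g where "g = omm1 n"
  have s1: "sorting_by g R sigma1" using assms(5) g_def by simp
  obtain x where x: "x \<in> set R" "v = omm n x" using vin by blast
  define v1 where "v1 = g x"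
  have vv: "v = (v1, int n - v1)" using x omm_eq v1_def g_def by simp
  have mpos: "m > 0" using x m_def by (cases R) auto
  have fin: "finite (g ` set R)" by simp
  have minv: "vmin = g (R ! sigma1 0)"
  proof -
    have "Min (g ` set R) = g (R ! sigma1 0)"
    proof (rule Min_eqI[OF fin])
      fix y assume "y \<in> g ` set R"
      then obtain i where i: "i < m" "y = g (R ! i)" by (auto simp: in_set_conv_nth m_def)
      obtain j where "j < m" "sigma1 j = i" using sort_surj[OF s1] i m_def by blast
      then show "g (R ! sigma1 0) \<le> y" using sort_mono[OF s1, of 0 j] i m_def by auto
    next
      show "g (R ! sigma1 0) \<in> g ` set R" using sort_range[OF s1, of 0] mpos m_def by auto
    qed
    then show ?thesis using assms(7) g_def by simp
  qed
  have maxv: "vmax = g (R ! sigma1 (m - 1))"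
  proof -
    have "Max (g ` set R) = g (R ! sigma1 (m - 1))"
    proof (rule Max_eqI[OF fin])
      fix y assume "y \<in> g ` set R"
      then obtain i where i: "i < m" "y = g (R ! i)" by (auto simp: in_set_conv_nth m_def)
      obtain j where "j < m" "sigma1 j = i" using sort_surj[OF s1] i m_def by blast
      then show "y \<le> g (R ! sigma1 (m - 1))" using sort_mono[OF s1, of j "m - 1"] i m_def by auto
    next
      show "g (R ! sigma1 (m - 1)) \<in> g ` set R" using sort_range[OF s1, of "m - 1"] mpos m_def by auto
    qed
    then show ?thesis using assms(8) g_def by simp
  qed
  have Dpos: "D > 0" using assms(9) D_def by simp
  have Deq: "g (R ! sigma1 (length R - 1)) - g (R ! sigma1 0) = D"
    using minv maxv D_def m_def by simp
  define J where "J = {j. j < m \<and> g (R ! sigma1 j) = v1}"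
  have finJ: "finite J" unfolding J_def by simp
  have neJ: "J \<noteq> {}"
  proof -
    obtain i where i: "i < m" "x = R ! i" using x by (auto simp: in_set_conv_nth m_def)
    obtain j where "j < m" "sigma1 j = i" using sort_surj[OF s1] i m_def by blast
    then show ?thesis using i v1_def J_def by auto
  qed
  have inR: "\<And>j. j < m \<Longrightarrow> R ! sigma1 j \<in> set R"
    using sort_range[OF s1] m_def by auto
  have key: "\<exists>j < m. g (R ! sigma1 j) = v1 \<and>
      cdis_obj g R sigma1 (sigma1 j) \<ge> ereal (2 / real_of_int D)"
  proof (cases "\<exists>y\<in>set R. omm n y = (v1 + 1, int n - v1 - 1)")
    case False
    then have nop: "\<And>y. y \<in> set R \<Longrightarrow> g y \<noteq> v1 + 1" using omm_eq g_def by fastforce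
    define j where "j = Max J"
    have jJ: "j \<in> J" using finJ neJ j_def by simp
    have "cdis_obj g R sigma1 (sigma1 j) \<ge> ereal (2 / real_of_int D)"
    proof (rule cdis_ge[OF s1 _ Deq Dpos])
      show "j < length R" using jJ J_def m_def by simp
      assume "0 < j" "j < length R - 1"
      then have sj: "Suc j < m" using m_def by simp
      have "Suc j \<notin> J" using finJ j_def by (metis Max_ge Suc_n_not_le_n)
      then have ne: "g (R ! sigma1 (Suc j)) \<noteq> v1" using sj J_def by simp
      have ge: "g (R ! sigma1 (Suc j)) \<ge> v1" using sort_mono[OF s1, of j "Suc j"] sj jJ J_def m_def by simp
      have ne2: "g (R ! sigma1 (Suc j)) \<noteq> v1 + 1" using nop inR sj by blast
      have le: "g (R ! sigma1 (j - 1)) \<le> v1" using sort_mono[OF s1, of "j - 1" j] jJ J_def m_def by simp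
      show "g (R ! sigma1 (Suc j)) - g (R ! sigma1 (j - 1)) \<ge> 2" using ne ge ne2 le by simp
    qed
    then show ?thesis using jJ J_def by auto
  next
    case True
    then have "v \<notin> {(v1, v2) \<in> omm n ` set R. \<exists>y\<in>set R. omm n y = (v1 - 1, v2 + 1)}"
      using vin vv by auto
    then have "\<not> (\<exists>y\<in>set R. omm n y = (v1 - 1, int n - v1 + 1))" using vv vin by auto
    then have nop: "\<And>y. y \<in> set R \<Longrightarrow> g y \<noteq> v1 - 1" using omm_eq g_def by fastforce
    define j where "j = Min J"
    have jJ: "j \<in> J" using finJ neJ j_def by simp
    have "cdis_obj g R sigma1 (sigma1 j) \<ge> ereal (2 / real_of_int D)"
    proof (rule cdis_ge[OF s1 _ Deq Dpos])
      show "j < length R" using jJ J_def m_def by simp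
      assume j0: "0 < j" "j < length R - 1"
      then have sj: "Suc j < m" using m_def by simp
      have "j - 1 \<notin> J" using finJ j_def j0 by (metis Min_le diff_less less_one not_le)
      then have ne: "g (R ! sigma1 (j - 1)) \<noteq> v1" using sj J_def by simp
      have le: "g (R ! sigma1 (j - 1)) \<le> v1" using sort_mono[OF s1, of "j - 1" j] jJ J_def m_def by simp
      have ne2: "g (R ! sigma1 (j - 1)) \<noteq> v1 - 1" using nop inR sj by simp
      have ge: "g (R ! sigma1 (Suc j)) \<ge> v1" using sort_mono[OF s1, of j "Suc j"] sj jJ J_def m_def by simp
      show "g (R ! sigma1 (Suc j)) - g (R ! sigma1 (j - 1)) \<ge> 2" using ne ge ne2 le by simp
    qed
    then show ?thesis using jJ J_def by auto
  qed
  then obtain j where j: "j < m" "g (R ! sigma1 j) = v1"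
      "cdis_obj g R sigma1 (sigma1 j) \<ge> ereal (2 / real_of_int D)" by blast
  define k where "k = sigma1 j"
  have km: "k < length R" using sort_range[OF s1] j k_def m_def by simp
  have "omm n (R ! k) = v" using vv j k_def omm_eq g_def by simp
  moreover have "cdis_obj omm2 R sigma2 k \<ge> 0" using cdis_nonneg[OF assms(6) km] .
  then have "cDis (omm1 n) omm2 R sigma1 sigma2 k \<ge> ereal (2 / real_of_int D) + 0"
    unfolding cDis_def using j(3) k_def g_def by (metis add_mono)
  ultimately show "\<exists>k < length R. omm n (R ! k) = v \<and>
             cDis (omm1 n) omm2 R sigma1 sigma2 k \<ge> ereal (2 / real_of_int (vmax - vmin))"
    using km D_def by auto
qed

end
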